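(* Let $\mathfrak{S}$ be a labelled sequent. Any saturation phase started on $\mathfrak{S}$ terminates and yields a finite derivation (with root $\mathfrak{S}$) whose open leaves are saturated.
   Context: Formulas: fix a countable set $\mathtt{Prop}$ of propositional atoms; formulas are generated by $A ::= \bot \mid p \mid A \to A \mid \Box A \mid \triangle A$ with $p \in \mathtt{Prop}$. Labelled sequents: fix a countable set $\mathtt{Lab}$ of labels. A labelled formula is $x:A$ with $x\in\mathtt{Lab}$ and $A$ a formula; a relational atom is $xRy$ or $xSy$ with $x,y \in \mathtt{Lab}$. A sequent $\mathcal{R},\Gamma\Rightarrow\Omega$ consists of a finite multiset $\mathcal{R}$ of relational atoms and finite multisets $\Gamma,\Omega$ of labelled formulas; commas denote multiset union. Rules used (premisses above, conclusion below; $\mathcal{R},\Gamma,\Omega$ arbitrary): ($\to$R) from $\mathcal{R},\Gamma,x:A\Rightarrow x:B,\Omega$ infer $\mathcal{R},\Gamma\Rightarrow x:A\to B,\Omega$; ($\to$L) from $\mathcal{R},\Gamma\Rightarrow x:A,\Omega$ and $\mathcal{R},\Gamma,x:B\Rightarrow\Omega$ infer $\mathcal{R},\Gamma,x:A\to B\Rightarrow\Omega$; ($\Box$L) from $\mathcal{R},xRy,x:\Box A,y:A,\Gamma\Rightarrow\Omega$ infer $\mathcal{R},xRy,x:\Box A,\Gamma\Rightarrow\Omega$; ($\triangle$L) from $\mathcal{R},xSy,x:\triangle A,y:A,\Gamma\Rightarrow\Omega$ infer $\mathcal{R},xSy,x:\triangle A,\Gamma\Rightarrow\Omega$; ($\mathrm{trans}_{\circ\bullet}$,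 for each $\circ,\bullet\in\{R,S\}$) from $\mathcal{R},x\circ y,y\bullet z,x\bullet z,\Gamma\Rightarrow\Omega$ infer $\mathcal{R},x\circ y,y\bullet z,\Gamma\Rightarrow\Omega$. A derivation is a (finite or infinite) tree of sequents built from rule instances, possibly with open leaves (leaves that are not conclusions of premiss-free rules). Saturation: in a sequent $\mathcal{R},\Gamma\Rightarrow\Omega$ containing $x:A$, the labelled formula $x:A$ is saturated if: $A\in\mathtt{Prop}$ or $A=\bot$; or $A=A_1\to A_2$ and [if $x:A\in\Gamma$ then $x:A_1\in\Omega$ or $x:A_2\in\Gamma$] and [if $x:A\in\Omega$ then $x:A_1\in\Gamma$ and $x:A_2\in\Omega$]; or $A=\Box A_1$ and if $x:A\in\Gamma$ then $y:A_1\in\Gamma$ for all $y$ with $xRy\in\mathcal{R}$; or $A=\triangle A_1$ and if $x:A\in\Gamma$ then $y:A_1\in\Gamma$ for all $y$ with $xSy\in\mathcal{R}$. A sequent is saturated if all its labelled formulas are saturated and $\mathcal{R}$ is closed under the transitivity rules (whenever $x\circ y,y\bullet z\in\mathcal{R}$ with $\circ,\bullet\in\{R,S\}$, also $x\bullet z\in\mathcal{R}$). Saturation phase: starting from a sequent (or from the open leaves of a derivation), repeatedly apply, bottom-up, the rules $\to$L, $\to$R, $\Box$L, $\triangle$L and $\mathrm{trans}_{\circ\bullet}$ to open leaves that are not saturated, in any order, each application addressing a formula or pair of relational atoms that is not yet saturated in that leaf, for as long as possible. *)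

theory Defs
  imports Main "HOL-Library.Multiset"
begin

datatype formula = Bot | Atom nat | Imp formula formula | Box formula | Tri formula

type_synonym label = nat

text \<open>Kinds of relational atoms: RR stands for xRy, SS for xSy.\<close>
datatype rk = RR | SS

type_synonym relatom = "rk \<times> label \<times> label"
type_synonym lformula = "label \<times> formula"

type_synonym sequent = "relatom multiset \<times> lformula multiset \<times> lformula multiset"

fun lf_saturated :: "sequent \<Rightarrow> lformula \<Rightarrow> bool" where
  "lf_saturated (Rl, G, D) (x, Bot) = True"
| "lf_saturated (Rl, G, D) (x, Atom p) = True"
| "lf_saturated (Rl, G, D) (x, Imp A1 A2) =
     (((x, Imp A1 A2) \<in># G \<longrightarrow> (x, A1) \<in># D \<or> (x, A2) \<in># G) \<and>
      ((x, Imp A1 A2) \<in># D \<longrightarrow> (x, A1) \<in># G \<and> (x, A2) \<in># D))"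
| "lf_saturated (Rl, G, D) (x, Box A1) =
     ((x, Box A1) \<in># G \<longrightarrow> (\<forall>y. (RR, x, y) \<in># Rl \<longrightarrow> (y, A1) \<in># G))"
| "lf_saturated (Rl, G, D) (x, Tri A1) =
     ((x, Tri A1) \<in># G \<longrightarrow> (\<forall>y. (SS, x, y) \<in># Rl \<longrightarrow> (y, A1) \<in># G))"

definition trans_closed :: "relatom multiset \<Rightarrow> bool" where
  "trans_closed Rl \<longleftrightarrow>
     (\<forall>c d x y z. (c, x, y) \<in># Rl \<and> (d, y, z) \<in># Rl \<longrightarrow> (d, x, z) \<in># Rl)"

definition saturated :: "sequent \<Rightarrow> bool" where
  "saturated s \<longleftrightarrow>
     (case s of (Rl, G, D) \<Rightarrow>
        (\<forall>lf \<in># G + D. lf_saturated s lf) \<and> trans_closed Rl)"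

datatype rapp =
    RImpL label formula formula
  | RImpR label formula formula
  | RBoxL label label formula
  | RTriL label label formula
  | RTrans rk rk label label label   \<comment> \<open>trans_{c d} with x c y, y d z, adding x d z\<close>

inductive rule_inst :: "rapp \<Rightarrow> sequent list \<Rightarrow> sequent \<Rightarrow> bool" where
  impL: "rule_inst (RImpL x A B)
           [(Rl, G, add_mset (x, A) D), (Rl, add_mset (x, B) G, D)]
           (Rl, add_mset (x, Imp A B) G, D)"
| impR: "rule_inst (RImpR x A B)
           [(Rl, add_mset (x, A) G, add_mset (x, B) D)]
           (Rl, G, add_mset (x, Imp A B) D)"
| boxL: "rule_inst (RBoxL x y A)
           [(add_mset (RR, x, y) Rl, add_mset (x, Box A) (add_mset (y, A) G), D)]
           (add_mset (RR, x, y) Rl, add_mset (x, Box A) G, D)"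
| triL: "rule_inst (RTriL x y A)
           [(add_mset (SS, x, y) Rl, add_mset (x, Tri A) (add_mset (y, A) G), D)]
           (add_mset (SS, x, y) Rl, add_mset (x, Tri A) G, D)"
| trans: "rule_inst (RTrans c d x y z)
           [(add_mset (c, x, y) (add_mset (d, y, z) (add_mset (d, x, z) Rl)), G, D)]
           (add_mset (c, x, y) (add_mset (d, y, z) Rl), G, D)"

fun addresses_unsat :: "rapp \<Rightarrow> sequent \<Rightarrow> bool" where
  "addresses_unsat (RImpL x A B) (Rl, G, D) = (\<not> ((x, A) \<in># D \<or> (x, B) \<in># G))"
| "addresses_unsat (RImpR x A B) (Rl, G, D) = (\<not> ((x, A) \<in># G \<and> (x, B) \<in># D))"
| "addresses_unsat (RBoxL x y A) (Rl, G, D) = ((y, A) \<notin># G)"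
| "addresses_unsat (RTriL x y A) (Rl, G, D) = ((y, A) \<notin># G)"
| "addresses_unsat (RTrans c d x y z) (Rl, G, D) = ((d, x, z) \<notin># Rl)"

text \<open>Finite derivation trees; Leaf s is an open leaf (no rule here is premiss-free).\<close>
datatype dtree = Leaf sequent | Node sequent rapp "dtree list"

fun root :: "dtree \<Rightarrow> sequent" where
  "root (Leaf s) = s"
| "root (Node s r ts) = s"

fun open_leaves :: "dtree \<Rightarrow> sequent list" where
  "open_leaves (Leaf s) = [s]"
| "open_leaves (Node s r ts) = concat (map open_leaves ts)"

fun is_derivation :: "dtree \<Rightarrow> bool" where
  "is_derivation (Leaf s) = True"
| "is_derivation (Node s r ts) =
     (rule_inst r (map root ts) s \<and> (\<forall>t \<in> set ts. is_derivation t))"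

inductive sat_step :: "dtree \<Rightarrow> dtree \<Rightarrow> bool" where
  expand: "\<not> saturated s \<Longrightarrow> rule_inst r ps s \<Longrightarrow> addresses_unsat r s \<Longrightarrow>
           sat_step (Leaf s) (Node s r (map Leaf ps))"
| inside: "sat_step t t' \<Longrightarrow>
           sat_step (Node s r (ts1 @ t # ts2)) (Node s r (ts1 @ t' # ts2))"

end

theory Submission
  imports Defs "HOL-Library.Multiset_Order"
begin

fun subf :: "formula \<Rightarrow> formula set" where
  "subf Bot = {Bot}"
| "subf (Atom p) = {Atom p}"
| "subf (Imp A B) = insert (Imp A B) (subf A \<union> subf B)"
| "subf (Box A) = insert (Box A) (subf A)"
| "subf (Tri A) = insert (Tri A) (subf A)"

lemma finite_subf: "finite (subf F)" by (induct F) auto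
lemma subf_refl: "F \<in> subf F" by (cases F) auto

fun winv :: "label set \<Rightarrow> formula set \<Rightarrow> sequent \<Rightarrow> bool" where
  "winv L Sb (Rl, G, D) = ((\<forall>(c,x,y) \<in> set_mset Rl. x \<in> L \<and> y \<in> L) \<and>
      (\<forall>(x,F) \<in> set_mset (G + D). x \<in> L \<and> subf F \<subseteq> Sb))"

fun hc :: "sequent \<Rightarrow> label \<times> formula \<times> bool \<Rightarrow> bool" where
  "hc (Rl, G, D) (x, Imp A B, True) = ((x, A) \<in># D \<or> (x, B) \<in># G)"
| "hc (Rl, G, D) (x, Imp A B, False) = ((x, A) \<in># G \<and> (x, B) \<in># D)"
| "hc s c = True"

lemma hc_mono:
  assumes "hc (Rl, G, D) c" "set_mset G \<subseteq> set_mset G'" "set_mset D \<subseteq> set_mset D'"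
  shows "hc (Rl', G', D') c"
proof -
  obtain y F b where c: "c = (y, F, b)" by (cases c) auto
  show ?thesis using assms unfolding c by (cases F; cases b) auto
qed

definition FC :: "label set \<Rightarrow> formula set \<Rightarrow> sequent \<Rightarrow> (label \<times> formula \<times> bool) set" where
  "FC L Sb s = {c \<in> L \<times> Sb \<times> UNIV. \<not> hc s c}"

definition key :: "nat \<Rightarrow> label \<times> formula \<times> bool \<Rightarrow> nat" where
  "key Bd c = Bd - size (fst (snd c))"

definition M2 :: "label set \<Rightarrow> formula set \<Rightarrow> nat \<Rightarrow> sequent \<Rightarrow> nat multiset" where
  "M2 L Sb Bd s = image_mset (key Bd) (mset_set (FC L Sb s))"

definition c1 :: "label set \<Rightarrow> sequent \<Rightarrow> nat" where
  "c1 L s = card ({RR, SS} \<times> L \<times> L - set_mset (fst s))"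

definition c3 :: "label set \<Rightarrow> formula set \<Rightarrow> sequent \<Rightarrow> nat" where
  "c3 L Sb s = card (L \<times> Sb - set_mset (fst (snd s)))"

definition RR' :: "label set \<Rightarrow> formula set \<Rightarrow> nat \<Rightarrow> (sequent \<times> sequent) set" where
  "RR' L Sb Bd = inv_image (less_than <*lex*> (mult {(x::nat, y). x < y} <*lex*> less_than))
      (\<lambda>s. (c1 L s, M2 L Sb Bd s, c3 L Sb s))"

lemma wf_RR': "wf (RR' L Sb Bd)"
  unfolding RR'_def
  by (intro wf_inv_image wf_lex_prod wf_less_than wf_mult) (simp add: wf_less)

lemma count_img_mset_set:
  "finite A \<Longrightarrow> count (image_mset f (mset_set A)) y = card {a\<in>A. f a = y}"
proof (induct A rule: finite_induct)
  case empty then show ?case by simp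
next
  case (insert a A)
  have "{b\<in>insert a A. f b = y} = (if f a = y then insert a {b\<in>A. f b = y} else {b\<in>A. f b = y})"
    by auto
  then show ?case using insert by auto
qed

lemma fc_decrease:
  fixes kf :: "'a \<Rightarrow> nat"
  assumes fA: "finite A" and fB: "finite B" and c0A: "c0 \<in> A" and c0B: "c0 \<notin> B"
    and lt: "\<forall>b\<in>B - A. kf b < kf c0"
  shows "(image_mset kf (mset_set B), image_mset kf (mset_set A)) \<in> mult {(x, y). x < y}"
proof -
  let ?x = "kf c0"
  have s1: "{b\<in>B. kf b = ?x} \<subseteq> {a\<in>A. kf a = ?x}"
  proof
    fix b assume "b \<in> {b\<in>B. kf b = ?x}"
    then have bB: "b \<in> B" and bk: "kf b = ?x" by auto
    show "b \<in> {a\<in>A. kf a = ?x}"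
    proof (cases "b \<in> A")
      case True then show ?thesis using bk by simp
    next
      case False
      then have "b \<in> B - A" using bB by simp
      then have "kf b < kf c0" using lt by blast
      then show ?thesis using bk by simp
    qed
  qed
  have sub: "{b\<in>B. kf b = ?x} \<subset> {a\<in>A. kf a = ?x}"
    using s1 c0A c0B by blast
  have cx: "card {b\<in>B. kf b = ?x} < card {a\<in>A. kf a = ?x}"
    using sub fA by (intro psubset_card_mono) auto
  show ?thesis
    unfolding mult\<^sub>H\<^sub>O
  proof (intro conjI allI impI)
    show "image_mset kf (mset_set B) \<noteq> image_mset kf (mset_set A)"
    proof
      assume eq: "image_mset kf (mset_set B) = image_mset kf (mset_set A)"
      have "count (image_mset kf (mset_set B)) ?x = count (image_mset kf (mset_set A)) ?x"
        by (simp only: eq)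
      then show False using cx by (simp only: count_img_mset_set fA fB)
    qed
  next
    fix y
    assume "count (image_mset kf (mset_set A)) y < count (image_mset kf (mset_set B)) y"
    then have "card {a\<in>A. kf a = y} < card {b\<in>B. kf b = y}"
      by (simp only: count_img_mset_set fA fB)
    then have ns: "\<not> {b\<in>B. kf b = y} \<subseteq> {a\<in>A. kf a = y}"
    proof -
      assume cl: "card {a\<in>A. kf a = y} < card {b\<in>B. kf b = y}"
      show ?thesis
      proof
        assume h: "{b\<in>B. kf b = y} \<subseteq> {a\<in>A. kf a = y}"
        have "card {b\<in>B. kf b = y} \<le> card {a\<in>A. kf a = y}"
          by (rule card_mono[OF _ h]) (simp add: fA)
        then show False using cl by simp
      qed
    qed
    then obtain b where b1: "b \<in> B" "b \<notin> A" "kf b = y" by blast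
    then have "b \<in> B - A" by simp
    then have "kf b < kf c0" using lt by blast
    then have "y < ?x" using b1 by simp
    then show "\<exists>x>y. count (image_mset kf (mset_set B)) x < count (image_mset kf (mset_set A)) x"
    proof (intro exI conjI)
      show "y < ?x" by fact
      show "count (image_mset kf (mset_set B)) ?x < count (image_mset kf (mset_set A)) ?x"
        using cx by (simp only: count_img_mset_set fA fB)
    qed
  qed
qed


lemma finite_FC: "finite L \<Longrightarrow> finite Sb \<Longrightarrow> finite (FC L Sb s)"
proof -
  assume "finite L" "finite Sb"
  then have "finite (L \<times> Sb \<times> (UNIV :: bool set))" by simp
  then show ?thesis unfolding FC_def by (rule finite_subset[rotated]) auto
qed

lemma M2_le:
  assumes fL: "finite L" and fS: "finite Sb" and mono: "\<forall>c. hc s c \<longrightarrow> hc p c"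
  shows "M2 L Sb Bd p = M2 L Sb Bd s \<or> (M2 L Sb Bd p, M2 L Sb Bd s) \<in> mult {(x::nat, y). x < y}"
proof -
  define A where "A = FC L Sb p"
  define B where "B = FC L Sb s"
  have sub: "A \<subseteq> B" using mono unfolding FC_def A_def B_def by blast
  have fA: "finite A" and fB: "finite B" using finite_FC fL fS unfolding A_def B_def by blast+
  have fd: "finite (B - A)" using fB by blast
  have un: "A \<union> (B - A) = B" using sub by blast
  have dj: "A \<inter> (B - A) = {}" by blast
  have ms: "mset_set B = mset_set A + mset_set (B - A)"
    using mset_set_Union[OF fA fd dj] un by simp
  show ?thesis
  proof (cases "B - A = {}")
    case True
    then have "A = B" using sub by blast
    then show ?thesis unfolding M2_def A_def B_def by simp
  next
    case False
    have "mset_set (B - A) \<noteq> {#}" using False fd by (simp add: mset_set_empty_iff)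
    then have ne: "image_mset (key Bd) (mset_set (B - A)) \<noteq> {#}" by simp
    have "(image_mset (key Bd) (mset_set A) + {#},
           image_mset (key Bd) (mset_set A) + image_mset (key Bd) (mset_set (B - A)))
          \<in> mult {(x::nat, y). x < y}"
      by (rule one_step_implies_mult[OF ne]) simp
    then have "(image_mset (key Bd) (mset_set A), image_mset (key Bd) (mset_set B))
          \<in> mult {(x::nat, y). x < y}" unfolding ms by simp
    then show ?thesis unfolding M2_def A_def B_def by simp
  qed
qed

lemma M2_lt:
  assumes fL: "finite L" and fS: "finite Sb" and bd: "\<forall>F\<in>Sb. size F < Bd"
    and c0: "c0 \<in> FC L Sb s" and hp: "hc p c0"
    and new: "\<forall>c. hc s c \<and> \<not> hc p c \<longrightarrow> size (fst (snd c0)) < size (fst (snd c))"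
  shows "(M2 L Sb Bd p, M2 L Sb Bd s) \<in> mult {(x::nat, y). x < y}"
  unfolding M2_def
proof (rule fc_decrease)
  show "finite (FC L Sb s)" "finite (FC L Sb p)" using finite_FC fL fS by auto
  show "c0 \<in> FC L Sb s" by fact
  show "c0 \<notin> FC L Sb p" using hp unfolding FC_def by auto
  show "\<forall>b\<in>FC L Sb p - FC L Sb s. key Bd b < key Bd c0"
  proof
    fix b assume "b \<in> FC L Sb p - FC L Sb s"
    then have b1: "fst (snd b) \<in> Sb" "hc s b" "\<not> hc p b" unfolding FC_def by auto
    have "size (fst (snd c0)) < size (fst (snd b))" using new b1 by blast
    moreover have "size (fst (snd b)) < Bd" using bd b1 by blast
    ultimately show "key Bd b < key Bd c0" unfolding key_def by simp
  qed
qed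

lemma lex_iff:
  "((p, s) \<in> RR' L Sb Bd) \<longleftrightarrow>
    (c1 L p < c1 L s \<or> (c1 L p = c1 L s \<and> ((M2 L Sb Bd p, M2 L Sb Bd s) \<in> mult {(x::nat, y). x < y}
      \<or> (M2 L Sb Bd p = M2 L Sb Bd s \<and> c3 L Sb p < c3 L Sb s))))"
  unfolding RR'_def by (simp add: in_lex_prod)

lemma new_impL1:
  "hc (Rl, add_mset (x, Imp A B) G, D) c \<Longrightarrow> \<not> hc (Rl, G, add_mset (x, A) D) c
   \<Longrightarrow> size (Imp A B) < size (fst (snd c))"
proof -
  assume a: "hc (Rl, add_mset (x, Imp A B) G, D) c" "\<not> hc (Rl, G, add_mset (x, A) D) c"
  obtain y F b where c: "c = (y, F, b)" by (cases c) auto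
  show ?thesis using a unfolding c by (cases F; cases b) auto
qed

lemma new_impL2:
  "hc (Rl, add_mset (x, Imp A B) G, D) c \<Longrightarrow> \<not> hc (Rl, add_mset (x, B) G, D) c
   \<Longrightarrow> size (Imp A B) < size (fst (snd c))"
proof -
  assume a: "hc (Rl, add_mset (x, Imp A B) G, D) c" "\<not> hc (Rl, add_mset (x, B) G, D) c"
  obtain y F b where c: "c = (y, F, b)" by (cases c) auto
  show ?thesis using a unfolding c by (cases F; cases b) auto
qed

lemma new_impR:
  "hc (Rl, G, add_mset (x, Imp A B) D) c \<Longrightarrow> \<not> hc (Rl, add_mset (x, A) G, add_mset (x, B) D) c
   \<Longrightarrow> size (Imp A B) < size (fst (snd c))"
proof -
  assume a: "hc (Rl, G, add_mset (x, Imp A B) D) c" "\<not> hc (Rl, add_mset (x, A) G, add_mset (x, B) D) c"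
  obtain y F b where c: "c = (y, F, b)" by (cases c) auto
  show ?thesis using a unfolding c by (cases F; cases b) auto
qed

lemma step_impL:
  assumes fL: "finite L" and fS: "finite Sb" and bd: "\<forall>F\<in>Sb. size F < Bd"
    and iv: "winv L Sb (Rl, add_mset (x, Imp A B) G, D)"
    and au: "\<not> ((x, A) \<in># D \<or> (x, B) \<in># add_mset (x, Imp A B) G)"
    and p: "p = (Rl, G, add_mset (x, A) D) \<or> p = (Rl, add_mset (x, B) G, D)"
  shows "winv L Sb p \<and> (p, (Rl, add_mset (x, Imp A B) G, D)) \<in> RR' L Sb Bd"
proof
  have xL: "x \<in> L" and sI: "subf (Imp A B) \<subseteq> Sb" using iv by auto
  show "winv L Sb p" using p iv sI xL by auto
  let ?s = "(Rl, add_mset (x, Imp A B) G, D)"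
  have c0: "(x, Imp A B, True) \<in> FC L Sb ?s" using xL sI au unfolding FC_def by auto
  have "(M2 L Sb Bd p, M2 L Sb Bd ?s) \<in> mult {(x::nat, y). x < y}"
  proof (rule M2_lt[OF fL fS bd c0])
    show "hc p (x, Imp A B, True)" using p by auto
    show "\<forall>c. hc ?s c \<and> \<not> hc p c \<longrightarrow> size (fst (snd (x, Imp A B, True))) < size (fst (snd c))"
      using p new_impL1 new_impL2 by fastforce
  qed
  moreover have "c1 L p = c1 L ?s" using p unfolding c1_def by auto
  ultimately show "(p, ?s) \<in> RR' L Sb Bd" unfolding lex_iff by simp
qed

lemma step_impR:
  assumes fL: "finite L" and fS: "finite Sb" and bd: "\<forall>F\<in>Sb. size F < Bd"
    and iv: "winv L Sb (Rl, G, add_mset (x, Imp A B) D)"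
    and au: "\<not> ((x, A) \<in># G \<and> (x, B) \<in># add_mset (x, Imp A B) D)"
    and p: "p = (Rl, add_mset (x, A) G, add_mset (x, B) D)"
  shows "winv L Sb p \<and> (p, (Rl, G, add_mset (x, Imp A B) D)) \<in> RR' L Sb Bd"
proof
  have xL: "x \<in> L" and sI: "subf (Imp A B) \<subseteq> Sb" using iv by auto
  show "winv L Sb p" using p iv sI xL by auto
  let ?s = "(Rl, G, add_mset (x, Imp A B) D)"
  have c0: "(x, Imp A B, False) \<in> FC L Sb ?s" using xL sI au unfolding FC_def by auto
  have "(M2 L Sb Bd p, M2 L Sb Bd ?s) \<in> mult {(x::nat, y). x < y}"
  proof (rule M2_lt[OF fL fS bd c0])
    show "hc p (x, Imp A B, False)" using p by auto
    show "\<forall>c. hc ?s c \<and> \<not> hc p c \<longrightarrow> size (fst (snd (x, Imp A B, False))) < size (fst (snd c))"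
      using p new_impR by fastforce
  qed
  moreover have "c1 L p = c1 L ?s" using p unfolding c1_def by auto
  ultimately show "(p, ?s) \<in> RR' L Sb Bd" unfolding lex_iff by simp
qed

lemma step_boxL:
  assumes fL: "finite L" and fS: "finite Sb"
    and iv: "winv L Sb (add_mset (k, x, y) Rl, add_mset (x, Mo A) G, D)"
    and sA: "subf A \<subseteq> subf (Mo A)"
    and au: "(y, A) \<notin># add_mset (x, Mo A) G"
    and p: "p = (add_mset (k, x, y) Rl, add_mset (x, Mo A) (add_mset (y, A) G), D)"
  shows "winv L Sb p \<and> (p, (add_mset (k, x, y) Rl, add_mset (x, Mo A) G, D)) \<in> RR' L Sb Bd"
proof
  let ?s = "(add_mset (k, x, y) Rl, add_mset (x, Mo A) G, D)"
  have yL: "y \<in> L" and sI: "subf (Mo A) \<subseteq> Sb" using iv by auto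
  have sAA: "subf A \<subseteq> Sb" using sA sI by auto
  have AS: "A \<in> Sb" using sAA subf_refl by auto
  show "winv L Sb p" using p iv sI yL sAA by auto
  have mono: "\<forall>c. hc ?s c \<longrightarrow> hc p c"
  proof (intro allI impI)
    fix c assume "hc ?s c"
    then show "hc p c" unfolding p by (rule hc_mono) auto
  qed
  have m2: "M2 L Sb Bd p = M2 L Sb Bd ?s \<or> (M2 L Sb Bd p, M2 L Sb Bd ?s) \<in> mult {(x::nat, y). x < y}"
    by (rule M2_le[OF fL fS mono])
  have e1: "c1 L p = c1 L ?s" using p unfolding c1_def by auto
  have "L \<times> Sb - set_mset (add_mset (x, Mo A) (add_mset (y, A) G))
        \<subset> L \<times> Sb - set_mset (add_mset (x, Mo A) G)"
    using yL AS au by auto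
  then have e3: "c3 L Sb p < c3 L Sb ?s" unfolding c3_def p
    by (intro psubset_card_mono) (use fL fS in auto)
  show "(p, ?s) \<in> RR' L Sb Bd" unfolding lex_iff using m2 e1 e3 by auto
qed

lemma step_trans:
  assumes fL: "finite L"
    and iv: "winv L Sb (add_mset (c, x, y) (add_mset (d, y, z) Rl), G, D)"
    and au: "(d, x, z) \<notin># add_mset (c, x, y) (add_mset (d, y, z) Rl)"
    and p: "p = (add_mset (c, x, y) (add_mset (d, y, z) (add_mset (d, x, z) Rl)), G, D)"
  shows "winv L Sb p \<and> (p, (add_mset (c, x, y) (add_mset (d, y, z) Rl), G, D)) \<in> RR' L Sb Bd"
proof
  let ?s = "(add_mset (c, x, y) (add_mset (d, y, z) Rl), G, D)"
  have xL: "x \<in> L" and zL: "z \<in> L" using iv by simp_all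
  show "winv L Sb p" using p iv xL zL by simp
  have dR: "d \<in> {RR, SS}" by (cases d) auto
  have i1: "(d, x, z) \<in> {RR, SS} \<times> L \<times> L - set_mset (fst ?s)"
    using xL zL au dR by simp
  have i2: "(d, x, z) \<notin> {RR, SS} \<times> L \<times> L - set_mset (fst p)"
    using p by simp
  have i3: "set_mset (fst ?s) \<subseteq> set_mset (fst p)" using p by auto
  have "{RR, SS} \<times> L \<times> L - set_mset (fst p) \<subset> {RR, SS} \<times> L \<times> L - set_mset (fst ?s)"
    using i1 i2 i3 by blast
  then have "c1 L p < c1 L ?s" unfolding c1_def
    by (intro psubset_card_mono) (use fL in auto)
  then show "(p, ?s) \<in> RR' L Sb Bd" unfolding lex_iff by auto
qed

lemma step_R:
  assumes fL: "finite L" and fS: "finite Sb" and bd: "\<forall>F\<in>Sb. size F < Bd"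
    and iv: "winv L Sb s" and ri: "rule_inst r ps s" and au: "addresses_unsat r s"
  shows "\<forall>p\<in>set ps. winv L Sb p \<and> (p, s) \<in> RR' L Sb Bd"
  using ri
proof cases
  case (impL x A B Rl G D)
  then show ?thesis using step_impL[OF fL fS bd] iv au by auto
next
  case (impR x A B Rl G D)
  then show ?thesis using step_impR[OF fL fS bd] iv au by auto
next
  case (boxL x y A Rl G D)
  then show ?thesis using step_boxL[OF fL fS, of RR x y Rl Box A G D] iv au by auto
next
  case (triL x y A Rl G D)
  then show ?thesis using step_boxL[OF fL fS, of SS x y Rl Tri A G D] iv au by auto
next
  case (trans c d x y z Rl G D)
  then show ?thesis using step_trans[OF fL] iv au by auto
qed

lemma ol_map_Leaf: "open_leaves (Node s r (map Leaf ps)) = ps"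
  by (induct ps) auto

lemma step_tree:
  assumes fL: "finite L" and fS: "finite Sb" and bd: "\<forall>F\<in>Sb. size F < Bd"
  shows "sat_step t t' \<Longrightarrow> \<forall>s\<in>set (open_leaves t). winv L Sb s \<Longrightarrow>
    (\<forall>s\<in>set (open_leaves t'). winv L Sb s) \<and>
    (\<exists>I J K. mset (open_leaves t) = I + J \<and> mset (open_leaves t') = I + K \<and> J \<noteq> {#} \<and>
       (\<forall>k\<in>#K. \<exists>j\<in>#J. (k, j) \<in> RR' L Sb Bd))"
proof (induct t t' rule: sat_step.induct)
  case (expand s r ps)
  have iv: "winv L Sb s" using expand by simp
  have st: "\<forall>p\<in>set ps. winv L Sb p \<and> (p, s) \<in> RR' L Sb Bd"
    by (rule step_R[OF fL fS bd iv expand(2) expand(3)])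
  show ?case unfolding ol_map_Leaf
  proof (intro conjI)
    show "\<forall>s\<in>set ps. winv L Sb s" using st by blast
    show "\<exists>I J K. mset (open_leaves (Leaf s)) = I + J \<and> mset ps = I + K \<and> J \<noteq> {#} \<and>
       (\<forall>k\<in>#K. \<exists>j\<in>#J. (k, j) \<in> RR' L Sb Bd)"
      by (rule exI[of _ "{#}"], rule exI[of _ "{#s#}"], rule exI[of _ "mset ps"]) (use st in simp)
  qed
next
  case (inside t t' s r ts1 ts2)
  have "\<forall>s\<in>set (open_leaves t). winv L Sb s" using inside(3) by simp
  then have IH: "(\<forall>s\<in>set (open_leaves t'). winv L Sb s) \<and>
    (\<exists>I J K. mset (open_leaves t) = I + J \<and> mset (open_leaves t') = I + K \<and> J \<noteq> {#} \<and>
       (\<forall>k\<in>#K. \<exists>j\<in>#J. (k, j) \<in> RR' L Sb Bd))" using inside(2) by blast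
  then obtain I J K where h: "mset (open_leaves t) = I + J" "mset (open_leaves t') = I + K"
    "J \<noteq> {#}" "\<forall>k\<in>#K. \<exists>j\<in>#J. (k, j) \<in> RR' L Sb Bd" by blast
  let ?A = "mset (concat (map open_leaves ts1))" and ?B = "mset (concat (map open_leaves ts2))"
  have e1: "mset (open_leaves (Node s r (ts1 @ t # ts2))) = (?A + ?B + I) + J"
    using h(1) by (simp add: ac_simps)
  have e2: "mset (open_leaves (Node s r (ts1 @ t' # ts2))) = (?A + ?B + I) + K"
    using h(2) by (simp add: ac_simps)
  have w: "\<forall>s\<in>set (open_leaves (Node s r (ts1 @ t' # ts2))). winv L Sb s"
    using IH inside(3) by auto
  show ?case using w e1 e2 h(3) h(4) by blast
qed

lemma root_step: "sat_step t t' \<Longrightarrow> root t' = root t"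
  by (induct rule: sat_step.induct) auto

lemma deriv_step: "sat_step t t' \<Longrightarrow> is_derivation t \<Longrightarrow> is_derivation t'"
proof (induct rule: sat_step.induct)
  case (expand s r ps)
  have "map root (map Leaf ps) = ps" by (induct ps) auto
  then show ?case using expand by simp
next
  case (inside t t' s r ts1 ts2)
  then show ?case using root_step[OF inside(1)] by auto
qed

lemma unsat_step:
  assumes ns: "\<not> saturated s"
  shows "\<exists>r ps. rule_inst r ps s \<and> addresses_unsat r s"
proof -
  obtain Rl G D where s: "s = (Rl, G, D)" by (cases s) auto
  from ns have "\<not> ((\<forall>lf \<in># G + D. lf_saturated s lf) \<and> trans_closed Rl)"
    unfolding saturated_def s by simp
  then have "(\<exists>lf \<in># G + D. \<not> lf_saturated s lf) \<or> \<not> trans_closed Rl" by blast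
  then show ?thesis
  proof
    assume "\<not> trans_closed Rl"
    then obtain c d x y z where a: "(c, x, y) \<in># Rl" "(d, y, z) \<in># Rl" "(d, x, z) \<notin># Rl"
      unfolding trans_closed_def by blast
    have ne: "(d, y, z) \<noteq> (c, x, y)" using a by auto
    define R0 where "R0 = Rl - {#(c, x, y)#} - {#(d, y, z)#}"
    have rl: "Rl = add_mset (c, x, y) ((Rl - {#(c, x, y)#}))" using a(1) by (rule insert_DiffM[symmetric])
    have "(d, y, z) \<in># add_mset (c, x, y) ((Rl - {#(c, x, y)#}))" by (subst rl[symmetric]) (rule a(2))
    then have b: "(d, y, z) \<in># (Rl - {#(c, x, y)#})" using ne by auto
    have "Rl = add_mset (c, x, y) (add_mset (d, y, z) R0)"
      unfolding R0_def using insert_DiffM[OF b] insert_DiffM[OF a(1)] by simp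
    then have s2: "s = (add_mset (c, x, y) (add_mset (d, y, z) R0), G, D)" using s by simp
    have "rule_inst (RTrans c d x y z)
           [(add_mset (c, x, y) (add_mset (d, y, z) (add_mset (d, x, z) R0)), G, D)]
           (add_mset (c, x, y) (add_mset (d, y, z) R0), G, D)" by (rule rule_inst.trans)
    moreover have "addresses_unsat (RTrans c d x y z) (add_mset (c, x, y) (add_mset (d, y, z) R0), G, D)"
      using a(3) s s2 by simp
    ultimately show ?thesis unfolding s2 by blast
  next
    assume "\<exists>lf \<in># G + D. \<not> lf_saturated s lf"
    then obtain lf0 where lf0: "lf0 \<in># G + D" "\<not> lf_saturated s lf0" by blast
    obtain x F where xF: "lf0 = (x, F)" by (cases lf0) auto
    have lf: "(x, F) \<in># G + D" "\<not> lf_saturated (Rl, G, D) (x, F)" using lf0 xF s by simp_all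
    show ?thesis
    proof (cases F)
      case Bot then show ?thesis using lf by simp
    next
      case (Atom p) then show ?thesis using lf by simp
    next
      case (Imp A B)
      have "\<not> (((x, Imp A B) \<in># G \<longrightarrow> (x, A) \<in># D \<or> (x, B) \<in># G) \<and>
      ((x, Imp A B) \<in># D \<longrightarrow> (x, A) \<in># G \<and> (x, B) \<in># D))"
        using lf(2) unfolding Imp by simp
      then have "((x, Imp A B) \<in># G \<and> \<not> ((x, A) \<in># D \<or> (x, B) \<in># G)) \<or>
                 ((x, Imp A B) \<in># D \<and> \<not> ((x, A) \<in># G \<and> (x, B) \<in># D))"
        by blast
      then show ?thesis
      proof
        assume h: "(x, Imp A B) \<in># G \<and> \<not> ((x, A) \<in># D \<or> (x, B) \<in># G)"
        define G0 where "G0 = (G - {#(x, Imp A B)#})"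
        have g: "G = add_mset (x, Imp A B) G0" unfolding G0_def using h by (intro insert_DiffM[symmetric]) simp
        have "rule_inst (RImpL x A B) [(Rl, G0, add_mset (x, A) D), (Rl, add_mset (x, B) G0, D)]
           (Rl, add_mset (x, Imp A B) G0, D)" by (rule rule_inst.impL)
        moreover have "addresses_unsat (RImpL x A B) (Rl, add_mset (x, Imp A B) G0, D)"
          using h g by simp
        ultimately show ?thesis unfolding s g by blast
      next
        assume h: "(x, Imp A B) \<in># D \<and> \<not> ((x, A) \<in># G \<and> (x, B) \<in># D)"
        define D0 where "D0 = (D - {#(x, Imp A B)#})"
        have g: "D = add_mset (x, Imp A B) D0" unfolding D0_def using h by (intro insert_DiffM[symmetric]) simp
        have "rule_inst (RImpR x A B) [(Rl, add_mset (x, A) G, add_mset (x, B) D0)]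
           (Rl, G, add_mset (x, Imp A B) D0)" by (rule rule_inst.impR)
        moreover have "addresses_unsat (RImpR x A B) (Rl, G, add_mset (x, Imp A B) D0)"
          using h g by simp
        ultimately show ?thesis unfolding s g by blast
      qed
    next
      case (Box A)
      have "(x, Box A) \<in># G \<and> \<not> (\<forall>y. (RR, x, y) \<in># Rl \<longrightarrow> (y, A) \<in># G)"
        using lf(2) unfolding Box by simp
      then obtain y where h: "(x, Box A) \<in># G" "(RR, x, y) \<in># Rl" "(y, A) \<notin># G"
        by blast
      define G0 where "G0 = (G - {#(x, Box A)#})"
      have g: "G = add_mset (x, Box A) G0" unfolding G0_def using h by (intro insert_DiffM[symmetric]) simp
      define R0 where "R0 = (Rl - {#(RR, x, y)#})"
      have rr: "Rl = add_mset (RR, x, y) R0" unfolding R0_def using h by (intro insert_DiffM[symmetric]) simp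
      have "rule_inst (RBoxL x y A)
           [(add_mset (RR, x, y) R0, add_mset (x, Box A) (add_mset (y, A) G0), D)]
           (add_mset (RR, x, y) R0, add_mset (x, Box A) G0, D)" by (rule rule_inst.boxL)
      moreover have "addresses_unsat (RBoxL x y A) (add_mset (RR, x, y) R0, add_mset (x, Box A) G0, D)"
        using h g by simp
      ultimately show ?thesis unfolding s g rr by blast
    next
      case (Tri A)
      have "(x, Tri A) \<in># G \<and> \<not> (\<forall>y. (SS, x, y) \<in># Rl \<longrightarrow> (y, A) \<in># G)"
        using lf(2) unfolding Tri by simp
      then obtain y where h: "(x, Tri A) \<in># G" "(SS, x, y) \<in># Rl" "(y, A) \<notin># G"
        by blast
      define G0 where "G0 = (G - {#(x, Tri A)#})"
      have g: "G = add_mset (x, Tri A) G0" unfolding G0_def using h by (intro insert_DiffM[symmetric]) simp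
      define R0 where "R0 = (Rl - {#(SS, x, y)#})"
      have rr: "Rl = add_mset (SS, x, y) R0" unfolding R0_def using h by (intro insert_DiffM[symmetric]) simp
      have "rule_inst (RTriL x y A)
           [(add_mset (SS, x, y) R0, add_mset (x, Tri A) (add_mset (y, A) G0), D)]
           (add_mset (SS, x, y) R0, add_mset (x, Tri A) G0, D)" by (rule rule_inst.triL)
      moreover have "addresses_unsat (RTriL x y A) (add_mset (SS, x, y) R0, add_mset (x, Tri A) G0, D)"
        using h g by simp
      ultimately show ?thesis unfolding s g rr by blast
    qed
  qed
qed

lemma exists_step: "s \<in> set (open_leaves t) \<Longrightarrow> \<not> saturated s \<Longrightarrow> \<exists>t'. sat_step t t'"
proof (induct t)
  case (Leaf s0)
  then have "s0 = s" by simp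
  then obtain r ps where "rule_inst r ps s0" "addresses_unsat r s0" using unsat_step Leaf by blast
  then show ?case using Leaf sat_step.expand \<open>s0 = s\<close> by blast
next
  case (Node s0 r ts)
  then obtain ti where ti: "ti \<in> set ts" "s \<in> set (open_leaves ti)" by auto
  then obtain ti' where st: "sat_step ti ti'" using Node by blast
  from ti(1) obtain ts1 ts2 where "ts = ts1 @ ti # ts2" by (meson split_list)
  then show ?case using sat_step.inside[OF st, of s0 r ts1 ts2] by blast
qed

fun labs :: "sequent \<Rightarrow> label set" where
  "labs (Rl, G, D) = fst ` set_mset (G + D) \<union> (fst \<circ> snd) ` set_mset Rl \<union> (snd \<circ> snd) ` set_mset Rl"

fun fms :: "sequent \<Rightarrow> formula set" where
  "fms (Rl, G, D) = \<Union> (subf ` snd ` set_mset (G + D))"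

lemma fin_labs: "finite (labs s)" by (cases s) auto

lemma fin_fms: "finite (fms s)" by (cases s) (auto simp: finite_subf)

lemma winv_init: "winv (labs s) (fms s) s"
proof -
  obtain Rl G D where s: "s = (Rl, G, D)" by (cases s) auto
  have r: "\<forall>(c,x,y) \<in> set_mset Rl. x \<in> labs s \<and> y \<in> labs s"
  proof (clarify)
    fix c x y assume "(c, x, y) \<in># Rl"
    then have "x \<in> (fst \<circ> snd) ` set_mset Rl" "y \<in> (snd \<circ> snd) ` set_mset Rl"
      by (force intro: rev_image_eqI)+
    then show "x \<in> labs s \<and> y \<in> labs s" unfolding s by auto
  qed
  have f: "\<forall>(x,F) \<in> set_mset (G + D). x \<in> labs s \<and> subf F \<subseteq> fms s"
  proof (clarify)
    fix x F assume a: "(x, F) \<in># G + D"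
    then have "x \<in> fst ` set_mset (G + D)" by (force intro: rev_image_eqI)
    moreover have "F \<in> snd ` set_mset (G + D)" using a by (force intro: rev_image_eqI)
    ultimately show "x \<in> labs s \<and> subf F \<subseteq> fms s" unfolding s by auto
  qed
  show ?thesis using r f unfolding s by simp
qed

theorem lemma2:
  fixes S :: sequent
  shows "\<not> (\<exists>f. f 0 = Leaf S \<and> (\<forall>n. sat_step (f n) (f (Suc n)))) \<and>
         (\<forall>t. sat_step\<^sup>*\<^sup>* (Leaf S) t \<and> \<not> (\<exists>t'. sat_step t t') \<longrightarrow>
           root t = S \<and> is_derivation t \<and> (\<forall>s \<in> set (open_leaves t). saturated s))"
proof (intro conjI allI impI)
  define L where "L = labs S"
  define Sb where "Sb = fms S"
  define Bd where "Bd = Suc (sum size Sb)"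
  have fL: "finite L" unfolding L_def by (rule fin_labs)
  have fS: "finite Sb" unfolding Sb_def by (rule fin_fms)
  have bd: "\<forall>F\<in>Sb. size F < Bd"
  proof
    fix F assume F: "F \<in> Sb"
    have "size F \<le> sum size Sb" by (rule member_le_sum[OF F _ fS]) simp
    then show "size F < Bd" unfolding Bd_def by simp
  qed
  have iv0: "winv L Sb S" unfolding L_def Sb_def by (rule winv_init)
  show "\<not> (\<exists>f. f 0 = Leaf S \<and> (\<forall>n. sat_step (f n) (f (Suc n))))"
  proof
    assume "\<exists>f. f 0 = Leaf S \<and> (\<forall>n. sat_step (f n) (f (Suc n)))"
    then obtain f where f0: "f 0 = Leaf S" and fs: "\<forall>n. sat_step (f n) (f (Suc n))" by blast
    have inv: "\<forall>s\<in>set (open_leaves (f n)). winv L Sb s" for n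
    proof (induct n)
      case 0 then show ?case using f0 iv0 by simp
    next
      case (Suc n) then show ?case using step_tree[OF fL fS bd fs[rule_format, of n]] by blast
    qed
    have dec: "(mset (open_leaves (f (Suc n))), mset (open_leaves (f n))) \<in> mult (RR' L Sb Bd)" for n
    proof -
      obtain I J K where h: "mset (open_leaves (f n)) = I + J" "mset (open_leaves (f (Suc n))) = I + K"
        "J \<noteq> {#}" "\<forall>k\<in>#K. \<exists>j\<in>#J. (k, j) \<in> RR' L Sb Bd"
        using step_tree[OF fL fS bd fs[rule_format, of n] inv[of n]] by blast
      show ?thesis unfolding h(1) h(2) by (rule one_step_implies_mult[OF h(3) h(4)])
    qed
    have "wf (mult (RR' L Sb Bd))" by (rule wf_mult[OF wf_RR'])
    moreover have "\<exists>g. \<forall>i. (g (Suc i), g i) \<in> mult (RR' L Sb Bd)"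
      by (rule exI[of _ "\<lambda>i. mset (open_leaves (f i))"]) (use dec in simp)
    ultimately show False unfolding wf_iff_no_infinite_down_chain by blast
  qed
next
  fix t
  assume a: "sat_step\<^sup>*\<^sup>* (Leaf S) t \<and> \<not> (\<exists>t'. sat_step t t')"
  have rd: "root t = S \<and> is_derivation t" using a[THEN conjunct1]
  proof (induct rule: rtranclp_induct)
    case base then show ?case by simp
  next
    case (step y z) then show ?case using root_step deriv_step by metis
  qed
  then show "root t = S" "is_derivation t" by auto
  show "\<forall>s\<in>set (open_leaves t). saturated s"
    using exists_step a by blast
qed

end
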